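(* Let $\beta>0$, $\lambda_p,\lambda_k\in\mathbb R$, and let $s_1,\dots,s_n\in\{\pm1\}$ be a nonconstant sign pattern, $S_\pm=\{i:s_i=\pm1\}$, $n_\pm=|S_\pm|$. Let $K^*_{ij}=a_+$ for $i,j\in S_+$, $b_+$ for $i\in S_+,j\in S_-$, $b_-$ for $i\in S_-,j\in S_+$, $a_-$ for $i,j\in S_-$, where \[ a_+=\frac{e^{\beta\lambda_p}}{n_+e^{\beta\lambda_p}+n_-e^{-\beta\lambda_p}},\ b_+=\frac{e^{-\beta\lambda_p}}{n_+e^{\beta\lambda_p}+n_-e^{-\beta\lambda_p}},\ a_-=\frac{e^{\beta\lambda_p}}{n_-e^{\beta\lambda_p}+n_+e^{-\beta\lambda_p}},\ b_-=\frac{e^{-\beta\lambda_p}}{n_-e^{\beta\lambda_p}+n_+e^{-\beta\lambda_p}}, \] let $\gamma_+=\lambda_p(n_+a_+-n_-b_+)$, $\gamma_-=\lambda_p(n_-a_--n_+b_-)$, $\gamma_i=\gamma_\pm$ for $i\in S_\pm$, and define $L_k:\mathbb R^n\to\mathbb R^n$ by $(L_kz)_i=-\gamma_iz_i+\lambda_k\sum_{j=1}^nK^*_{ij}z_j$. Let $V_\pm=\{z: z_i=0\text{ for }i\in S_\mp,\ \sum_{i\in S_\pm}z_i=0\}$ and $V_{\mathrm{mean}}=\{z: z\text{ constant on }S_+\text{ and on }S_-\}$. Then: on $V_+$ the only eigenvalue of $L_k$ is $-\gamma_+$, with multiplicity $n_+-1$; on $V_-$ the only eigenvalue is $-\gamma_-$,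 with multiplicity $n_--1$; and on $V_{\mathrm{mean}}$ the eigenvalues of $L_k$ are exactly those of \[ B_k=\begin{pmatrix}\lambda_kn_+a_+-\gamma_+ & \lambda_kn_-b_+\\ \lambda_kn_+b_- & \lambda_kn_-a_--\gamma_-\end{pmatrix}. \]
   Context: $L_k$ is the modewise (transverse direction $e_k$, $k\ne p$) linearization of the symmetric self-attention dynamics at the sign-split pure-mode equilibrium $x_i^*=s_ie_p$, where $\lambda_p,\lambda_k$ are eigenvalues of the symmetric interaction matrix. The subspaces $V_+,V_-,V_{\mathrm{mean}}$ are $L_k$-invariant and $\mathbb R^n=V_+\oplus V_-\oplus V_{\mathrm{mean}}$. *)

theory Defs
  imports "HOL-Analysis.Analysis"
begin

text \<open>Signs s :: 'n => real with values in {1,-1}; S_plus = {i. s i = 1}, S_minus = {i. s i = -1}.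
  The linear map L_k is extended complex-linearly to complex^'n so that (possibly non-real)
  eigenvalues and algebraic multiplicities are meaningful.\<close>

definition nplus :: "('n::finite \<Rightarrow> real) \<Rightarrow> real" where
  "nplus s = real (card {i. s i = 1})"
definition nminus :: "('n::finite \<Rightarrow> real) \<Rightarrow> real" where
  "nminus s = real (card {i. s i = -1})"

definition aplus :: "real \<Rightarrow> real \<Rightarrow> ('n::finite \<Rightarrow> real) \<Rightarrow> real" where
  "aplus \<beta> lp s = exp (\<beta>*lp) / (nplus s * exp (\<beta>*lp) + nminus s * exp (-\<beta>*lp))"
definition bplus :: "real \<Rightarrow> real \<Rightarrow> ('n::finite \<Rightarrow> real) \<Rightarrow> real" where
  "bplus \<beta> lp s = exp (-\<beta>*lp) / (nplus s * exp (\<beta>*lp) + nminus s * exp (-\<beta>*lp))"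
definition aminus :: "real \<Rightarrow> real \<Rightarrow> ('n::finite \<Rightarrow> real) \<Rightarrow> real" where
  "aminus \<beta> lp s = exp (\<beta>*lp) / (nminus s * exp (\<beta>*lp) + nplus s * exp (-\<beta>*lp))"
definition bminus :: "real \<Rightarrow> real \<Rightarrow> ('n::finite \<Rightarrow> real) \<Rightarrow> real" where
  "bminus \<beta> lp s = exp (-\<beta>*lp) / (nminus s * exp (\<beta>*lp) + nplus s * exp (-\<beta>*lp))"

definition Kstar :: "real \<Rightarrow> real \<Rightarrow> ('n::finite \<Rightarrow> real) \<Rightarrow> 'n \<Rightarrow> 'n \<Rightarrow> real" where
  "Kstar \<beta> lp s i j =
     (if s i = 1 then (if s j = 1 then aplus \<beta> lp s else bplus \<beta> lp s)
      else (if s j = 1 then bminus \<beta> lp s else aminus \<beta> lp s))"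

definition gplus :: "real \<Rightarrow> real \<Rightarrow> ('n::finite \<Rightarrow> real) \<Rightarrow> real" where
  "gplus \<beta> lp s = lp * (nplus s * aplus \<beta> lp s - nminus s * bplus \<beta> lp s)"
definition gminus :: "real \<Rightarrow> real \<Rightarrow> ('n::finite \<Rightarrow> real) \<Rightarrow> real" where
  "gminus \<beta> lp s = lp * (nminus s * aminus \<beta> lp s - nplus s * bminus \<beta> lp s)"

definition gam :: "real \<Rightarrow> real \<Rightarrow> ('n::finite \<Rightarrow> real) \<Rightarrow> 'n \<Rightarrow> real" where
  "gam \<beta> lp s i = (if s i = 1 then gplus \<beta> lp s else gminus \<beta> lp s)"

definition Lk :: "real \<Rightarrow> real \<Rightarrow> real \<Rightarrow> ('n::finite \<Rightarrow> real) \<Rightarrow> complex^'n \<Rightarrow> complex^'n" where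
  "Lk \<beta> lp lk s z = (\<chi> i. - of_real (gam \<beta> lp s i) * z$i
       + of_real lk * (\<Sum>j\<in>UNIV. of_real (Kstar \<beta> lp s i j) * z$j))"

definition Vplus :: "('n::finite \<Rightarrow> real) \<Rightarrow> (complex^'n) set" where
  "Vplus s = {z. (\<forall>i. s i = -1 \<longrightarrow> z$i = 0) \<and> (\<Sum>i\<in>{i. s i = 1}. z$i) = 0}"
definition Vminus :: "('n::finite \<Rightarrow> real) \<Rightarrow> (complex^'n) set" where
  "Vminus s = {z. (\<forall>i. s i = 1 \<longrightarrow> z$i = 0) \<and> (\<Sum>i\<in>{i. s i = -1}. z$i) = 0}"
definition Vmean :: "('n::finite \<Rightarrow> real) \<Rightarrow> (complex^'n) set" where
  "Vmean s = {z. (\<forall>i j. s i = 1 \<and> s j = 1 \<longrightarrow> z$i = z$j) \<and>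
                  (\<forall>i j. s i = -1 \<and> s j = -1 \<longrightarrow> z$i = z$j)}"

definition Bk :: "real \<Rightarrow> real \<Rightarrow> real \<Rightarrow> ('n::finite \<Rightarrow> real) \<Rightarrow> complex^2^2" where
  "Bk \<beta> lp lk s = (\<chi> r c. of_real
     (if r = 1 then (if c = 1 then lk * nplus s * aplus \<beta> lp s - gplus \<beta> lp s
                     else lk * nminus s * bplus \<beta> lp s)
      else (if c = 1 then lk * nplus s * bminus \<beta> lp s
            else lk * nminus s * aminus \<beta> lp s - gminus \<beta> lp s)))"

text \<open>Eigenvalue of a linear map f restricted to a subspace V, and its algebraic
  multiplicity = (complex) dimension of the generalized eigenspace inside V.\<close>
definition eigenvalue_on :: "('a::field^'n \<Rightarrow> 'a^'n) \<Rightarrow> ('a^'n) set \<Rightarrow> 'a \<Rightarrow> bool" where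
  "eigenvalue_on f V \<mu> \<longleftrightarrow> (\<exists>z\<in>V. z \<noteq> 0 \<and> f z = \<mu> *s z)"

definition gen_eigenspace_on :: "('a::field^'n \<Rightarrow> 'a^'n) \<Rightarrow> ('a^'n) set \<Rightarrow> 'a \<Rightarrow> ('a^'n) set" where
  "gen_eigenspace_on f V \<mu> = {z\<in>V. \<exists>m. ((\<lambda>w. f w - \<mu> *s w) ^^ m) z = 0}"

definition alg_mult_on :: "('a::field^'n \<Rightarrow> 'a^'n) \<Rightarrow> ('a^'n) set \<Rightarrow> 'a \<Rightarrow> nat" where
  "alg_mult_on f V \<mu> = vec.dim (gen_eigenspace_on f V \<mu>)"

end

theory Submission
  imports Defs
begin


lemma subspace_Vset:
  fixes P :: "'n::finite set"
  shows "vec.subspace {z::complex^'n. (\<forall>i. i \<notin> P \<longrightarrow> z$i = 0) \<and> (\<Sum>i\<in>P. z$i) = 0}"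
  unfolding vec.subspace_def
  by (auto simp: sum.distrib sum_distrib_left[symmetric])

lemma dim_Vset:
  fixes P :: "'n::finite set"
  assumes "P \<noteq> {}"
  shows "vec.dim {z::complex^'n. (\<forall>i. i \<notin> P \<longrightarrow> z$i = 0) \<and> (\<Sum>i\<in>P. z$i) = 0} = card P - 1"
proof -
  define V where "V = {z::complex^'n. (\<forall>i. i \<notin> P \<longrightarrow> z$i = 0) \<and> (\<Sum>i\<in>P. z$i) = 0}"
  define W where "W = {z::complex^'n. (\<forall>i. i \<notin> P \<longrightarrow> z$i = 0)}"
  define B where "B = (\<lambda>j. axis j (1::complex)) ` P"
  obtain i0 where i0: "i0 \<in> P" using assms by auto
  define e where "e = axis i0 (1::complex)"
  have subV: "vec.subspace V" unfolding V_def by (rule subspace_Vset)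
  have spanV: "vec.span V = V" using subV by (simp add: vec.span_eq_iff)
  have VW: "V \<subseteq> W" unfolding V_def W_def by auto
  have eW: "e \<in> W" unfolding W_def e_def using i0 by (auto simp: axis_def)
  have eV: "e \<notin> V" unfolding V_def e_def using i0 by (auto simp: axis_def)
  have BW: "B \<subseteq> W" unfolding B_def W_def by (auto simp: axis_def)
  have Bind: "vec.independent B"
    by (rule vec.independent_mono[OF independent_cart_basis]) (auto simp: B_def cart_basis_def)
  have cardB: "card B = card P"
    unfolding B_def by (rule card_image) (auto simp: inj_on_def axis_eq_axis)
  have WspanB: "W \<subseteq> vec.span B"
  proof
    fix z assume z: "z \<in> W"
    have "z = (\<Sum>j\<in>P. z$j *s axis j 1)"
    proof (subst vec_eq_iff, intro allI)
      fix i
      have "(\<Sum>j\<in>P. z$j *s axis j (1::complex)) $ i = (\<Sum>j\<in>P. (if j = i then z$j else 0))"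
        unfolding sum_component by (rule sum.cong) (auto simp: axis_def)
      also have "\<dots> = z $ i" using z by (auto simp: W_def sum.delta')
      finally show "z $ i = (\<Sum>j\<in>P. z$j *s axis j 1) $ i" by simp
    qed
    also have "\<dots> \<in> vec.span B"
      by (intro vec.span_sum vec.span_scale vec.span_base) (auto simp: B_def)
    finally show "z \<in> vec.span B" .
  qed
  have dW1: "vec.dim W \<le> card P"
    using vec.dim_le_card[OF WspanB] cardB by (simp add: B_def)
  have dW2: "card P \<le> vec.dim W"
    using vec.dim_subset[OF BW] vec.dim_eq_card_independent[OF Bind] cardB by simp
  have WspanV: "W \<subseteq> vec.span (insert e V)"
  proof
    fix z assume z: "z \<in> W"
    define c where "c = (\<Sum>i\<in>P. z$i)"
    have "(\<Sum>x\<in>P. c * e$x) = (\<Sum>x\<in>P. if x = i0 then c else 0)"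
      by (rule sum.cong) (auto simp: e_def axis_def)
    also have "\<dots> = c" using i0 by (simp add: sum.delta')
    finally have ce: "(\<Sum>x\<in>P. c * e$x) = c" .
    have "(\<Sum>x\<in>P. (z - c *s e)$x) = (\<Sum>x\<in>P. z$x) - (\<Sum>x\<in>P. c * e$x)"
      by (simp add: sum_subtractf)
    hence "(\<Sum>x\<in>P. (z - c *s e)$x) = 0" using ce c_def by simp
    moreover have "\<forall>i. i \<notin> P \<longrightarrow> (z - c *s e)$i = 0"
      using z i0 unfolding W_def e_def by (auto simp: axis_def)
    ultimately have "z - c *s e \<in> V" unfolding V_def by simp
    hence "(z - c *s e) + c *s e \<in> vec.span (insert e V)"
      by (intro vec.span_add vec.span_scale vec.span_base) auto
    thus "z \<in> vec.span (insert e V)" by simp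
  qed
  have d1: "vec.dim W \<le> vec.dim V + 1"
    using vec.dim_subset[OF WspanV] vec.dim_insert[of e V] by (auto split: if_splits)
  have "vec.span V \<subset> vec.span W"
  proof -
    have 1: "vec.span V \<subseteq> vec.span W" by (rule vec.span_mono[OF VW])
    have 2: "e \<in> vec.span W" using eW by (rule vec.span_base)
    have 3: "e \<notin> vec.span V" unfolding spanV by (rule eV)
    show ?thesis using 1 2 3 by blast
  qed
  hence d2: "vec.dim V < vec.dim W" by (rule vec.dim_psubset)
  show ?thesis using d1 d2 dW1 dW2 unfolding V_def[symmetric] by linarith
qed



lemma eig_only:
  assumes "\<forall>z\<in>V. L z = c *s z" "eigenvalue_on L V \<mu>"
  shows "\<mu> = (c::'a::field)"
proof -
  obtain z where z: "z \<in> V" "z \<noteq> 0" "L z = \<mu> *s z" using assms(2) unfolding eigenvalue_on_def by blast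
  obtain i where i: "z$i \<noteq> 0" using z(2) by (metis vec_eq_iff zero_index)
  have "c *s z = \<mu> *s z" using assms(1) z by auto
  hence "c * z$i = \<mu> * z$i" by (metis vector_smult_component)
  thus ?thesis using i by simp
qed

lemma gen_all:
  assumes "\<forall>z\<in>V. L z = c *s z"
  shows "gen_eigenspace_on L V c = V"
  unfolding gen_eigenspace_on_def
proof (intro set_eqI iffI)
  fix z assume "z \<in> V"
  hence "((\<lambda>w. L w - c *s w) ^^ 1) z = 0" using assms by simp
  thus "z \<in> {z \<in> V. \<exists>m. ((\<lambda>w. L w - c *s w) ^^ m) z = 0}" using \<open>z \<in> V\<close> by blast
qed auto

lemma conj_iter:
  fixes \<phi> :: "'a::field^'m \<Rightarrow> 'a^'n"
  assumes lin: "Vector_Spaces.linear (*s) (*s) \<phi>" and comm: "\<And>x. L (\<phi> x) = \<phi> (B x)"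
  shows "((\<lambda>w. L w - \<mu> *s w) ^^ m) (\<phi> x) = \<phi> (((\<lambda>w. B w - \<mu> *s w) ^^ m) x)"
proof (induction m)
  case (Suc m)
  show ?case using Suc
    by (simp add: comm vec.linear_diff[OF lin] vec.linear_scale[OF lin])
qed simp

lemma conj_thm:
  fixes \<phi> :: "'a::field^'m \<Rightarrow> 'a^'n"
  assumes lin: "Vector_Spaces.linear (*s) (*s) \<phi>" and inj: "inj \<phi>" and comm: "\<And>x. L (\<phi> x) = \<phi> (B x)"
  shows "eigenvalue_on L (range \<phi>) \<mu> \<longleftrightarrow> eigenvalue_on B UNIV \<mu>"
    and "alg_mult_on L (range \<phi>) \<mu> = alg_mult_on B UNIV \<mu>"
proof -
  have z0: "\<phi> y = 0 \<longleftrightarrow> y = 0" for y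
    using inj vec.linear_0[OF lin] by (metis injD)
  have eq: "\<phi> y = \<phi> y' \<longleftrightarrow> y = y'" for y y' using inj by (meson injD)
  show "eigenvalue_on L (range \<phi>) \<mu> \<longleftrightarrow> eigenvalue_on B UNIV \<mu>"
    unfolding eigenvalue_on_def
  proof
    assume "\<exists>z\<in>range \<phi>. z \<noteq> 0 \<and> L z = \<mu> *s z"
    then obtain y where "\<phi> y \<noteq> 0" "L (\<phi> y) = \<mu> *s \<phi> y" by auto
    hence "y \<noteq> 0" "\<phi> (B y) = \<phi> (\<mu> *s y)" using z0 comm vec.linear_scale[OF lin] by auto
    thus "\<exists>z\<in>UNIV. z \<noteq> 0 \<and> B z = \<mu> *s z" using eq by blast
  next
    assume "\<exists>z\<in>UNIV. z \<noteq> 0 \<and> B z = \<mu> *s z"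
    then obtain y where "y \<noteq> 0" "B y = \<mu> *s y" by auto
    thus "\<exists>z\<in>range \<phi>. z \<noteq> 0 \<and> L z = \<mu> *s z"
      using z0 comm vec.linear_scale[OF lin] by (intro bexI[of _ "\<phi> y"]) auto
  qed
  have "gen_eigenspace_on L (range \<phi>) \<mu> = \<phi> ` gen_eigenspace_on B UNIV \<mu>"
    unfolding gen_eigenspace_on_def
  proof (intro set_eqI iffI)
    fix z assume "z \<in> {z \<in> range \<phi>. \<exists>m. ((\<lambda>w. L w - \<mu> *s w) ^^ m) z = 0}"
    then obtain y m where "z = \<phi> y" "((\<lambda>w. L w - \<mu> *s w) ^^ m) (\<phi> y) = 0" by auto
    hence "z = \<phi> y" "((\<lambda>w. B w - \<mu> *s w) ^^ m) y = 0"
      using conj_iter[of \<phi> L B, OF lin comm] z0 by auto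
    thus "z \<in> \<phi> ` {z \<in> UNIV. \<exists>m. ((\<lambda>w. B w - \<mu> *s w) ^^ m) z = 0}" by blast
  next
    fix z assume "z \<in> \<phi> ` {z \<in> UNIV. \<exists>m. ((\<lambda>w. B w - \<mu> *s w) ^^ m) z = 0}"
    then obtain y m where "z = \<phi> y" "((\<lambda>w. B w - \<mu> *s w) ^^ m) y = 0" by auto
    hence "z = \<phi> y" "((\<lambda>w. L w - \<mu> *s w) ^^ m) (\<phi> y) = 0"
      using conj_iter[of \<phi> L B, OF lin comm] z0 by auto
    thus "z \<in> {z \<in> range \<phi>. \<exists>m. ((\<lambda>w. L w - \<mu> *s w) ^^ m) z = 0}" by blast
  qed
  thus "alg_mult_on L (range \<phi>) \<mu> = alg_mult_on B UNIV \<mu>"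
    unfolding alg_mult_on_def
    by (simp only: vec.dim_image_eq[OF lin inj_on_subset[OF inj subset_UNIV]])
qed



lemma Lk_comp: "(Lk \<beta> lp lk s z) $ i = - of_real (gam \<beta> lp s i) * z$i
       + of_real lk * (\<Sum>j\<in>UNIV. of_real (Kstar \<beta> lp s i j) * z$j)"
  by (simp add: Lk_def)

lemma Vplus_eq:
  assumes sg: "\<forall>i. s i = 1 \<or> s i = -1"
  shows "Vplus s = {z::complex^'n::finite. (\<forall>i. i \<notin> {j. s j = 1} \<longrightarrow> z$i = 0) \<and> (\<Sum>i\<in>{j. s j = 1}. z$i) = 0}"
proof -
  have e: "\<And>i. (s i = -1) \<longleftrightarrow> (s i \<noteq> 1)" using sg by force
  show ?thesis unfolding Vplus_def by (simp only: e mem_Collect_eq)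
qed

lemma Vminus_eq:
  assumes sg: "\<forall>i. s i = 1 \<or> s i = -1"
  shows "Vminus s = {z::complex^'n::finite. (\<forall>i. i \<notin> {j. s j = -1} \<longrightarrow> z$i = 0) \<and> (\<Sum>i\<in>{j. s j = -1}. z$i) = 0}"
proof -
  have e: "\<And>i. (s i = 1) \<longleftrightarrow> (s i \<noteq> -1)" using sg by force
  show ?thesis unfolding Vminus_def by (simp only: e mem_Collect_eq)
qed

lemma Lplus:
  assumes sg: "\<forall>i. s i = 1 \<or> s i = -1" and z: "z \<in> Vplus s"
  shows "Lk \<beta> lp lk s z = (- of_real (gplus \<beta> lp s)) *s z"
proof (subst vec_eq_iff, intro allI)
  fix i
  let ?P = "{j. s j = 1}"
  have z0: "j \<notin> ?P \<Longrightarrow> z$j = 0" for j using z unfolding Vplus_eq[OF sg] by blast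
  have zs: "(\<Sum>j\<in>?P. z$j) = 0" using z unfolding Vplus_def by simp
  define c where "c = (of_real (if s i = 1 then aplus \<beta> lp s else bminus \<beta> lp s) :: complex)"
  have "(\<Sum>j\<in>UNIV. of_real (Kstar \<beta> lp s i j) * z$j) = (\<Sum>j\<in>?P. of_real (Kstar \<beta> lp s i j) * z$j)"
    by (rule sum.mono_neutral_right) (auto simp: z0)
  also have "\<dots> = (\<Sum>j\<in>?P. c * z$j)"
    by (rule sum.cong) (auto simp: Kstar_def c_def)
  also have "\<dots> = 0" by (simp add: sum_distrib_left[symmetric] zs)
  finally have S: "(\<Sum>j\<in>UNIV. of_real (Kstar \<beta> lp s i j) * z$j) = 0" .
  show "Lk \<beta> lp lk s z $ i = ((- of_real (gplus \<beta> lp s)) *s z) $ i"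
    unfolding Lk_comp S using z0[of i] by (auto simp: gam_def)
qed

lemma Lminus:
  assumes sg: "\<forall>i. s i = 1 \<or> s i = -1" and z: "z \<in> Vminus s"
  shows "Lk \<beta> lp lk s z = (- of_real (gminus \<beta> lp s)) *s z"
proof (subst vec_eq_iff, intro allI)
  fix i
  let ?P = "{j. s j = -1}"
  have z0: "j \<notin> ?P \<Longrightarrow> z$j = 0" for j using z unfolding Vminus_eq[OF sg] by blast
  have zs: "(\<Sum>j\<in>?P. z$j) = 0" using z unfolding Vminus_def by simp
  define c where "c = (of_real (if s i = 1 then bplus \<beta> lp s else aminus \<beta> lp s) :: complex)"
  have "(\<Sum>j\<in>UNIV. of_real (Kstar \<beta> lp s i j) * z$j) = (\<Sum>j\<in>?P. of_real (Kstar \<beta> lp s i j) * z$j)"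
    by (rule sum.mono_neutral_right) (auto simp: z0)
  also have "\<dots> = (\<Sum>j\<in>?P. c * z$j)"
    by (rule sum.cong) (auto simp: Kstar_def c_def)
  also have "\<dots> = 0" by (simp add: sum_distrib_left[symmetric] zs)
  finally have S: "(\<Sum>j\<in>UNIV. of_real (Kstar \<beta> lp s i j) * z$j) = 0" .
  have "s i = 1 \<Longrightarrow> z$i = 0" using z0[of i] by auto
  moreover have "s i \<noteq> 1 \<Longrightarrow> gam \<beta> lp s i = gminus \<beta> lp s" by (simp add: gam_def)
  ultimately show "Lk \<beta> lp lk s z $ i = ((- of_real (gminus \<beta> lp s)) *s z) $ i"
    unfolding Lk_comp S by (cases "s i = 1") auto
qed



definition Mphi :: "('n::finite \<Rightarrow> real) \<Rightarrow> complex^2^'n" where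
  "Mphi s = (\<chi> i j. if s i = 1 then (if j = 1 then 1 else 0) else (if j = 1 then 0 else 1))"

lemma Mphi_comp: "(Mphi s *v w) $ i = (if s i = 1 then w$1 else w$2)"
  by (simp add: Mphi_def matrix_vector_mult_def sum_2)

lemma Bk_comp: "(Bk \<beta> lp lk s *v w) $ r = Bk \<beta> lp lk s $ r $ 1 * w$1 + Bk \<beta> lp lk s $ r $ 2 * w$2"
  by (simp add: matrix_vector_mult_def sum_2)

lemma Kstar_sum:
  assumes sg: "\<forall>i. s i = 1 \<or> s i = -1"
  shows "(\<Sum>j\<in>UNIV. of_real (Kstar \<beta> lp s i j) * (Mphi s *v w)$j)
     = of_real (nplus s * (if s i = 1 then aplus \<beta> lp s else bminus \<beta> lp s)) * w$1
     + of_real (nminus s * (if s i = 1 then bplus \<beta> lp s else aminus \<beta> lp s)) * w$2"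
proof -
  define K1 where "K1 = (of_real (if s i = 1 then aplus \<beta> lp s else bminus \<beta> lp s) :: complex)"
  define K2 where "K2 = (of_real (if s i = 1 then bplus \<beta> lp s else aminus \<beta> lp s) :: complex)"
  have "(\<Sum>j\<in>UNIV. of_real (Kstar \<beta> lp s i j) * (Mphi s *v w)$j)
      = (\<Sum>j\<in>UNIV. if s j = 1 then K1 * w$1 else K2 * w$2)"
    by (rule sum.cong) (auto simp: Mphi_comp Kstar_def K1_def K2_def)
  also have "\<dots> = (\<Sum>j\<in>UNIV \<inter> {j. s j = 1}. K1 * w$1) + (\<Sum>j\<in>UNIV \<inter> - {j. s j = 1}. K2 * w$2)"
    by (rule sum.If_cases) simp
  also have "UNIV \<inter> - {j. s j = 1} = {j. s j = -1}" using sg by force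
  also have "UNIV \<inter> {j. s j = 1} = {j. s j = 1}" by simp
  finally show ?thesis
    by (simp add: K1_def K2_def nplus_def nminus_def)
qed

lemma ring_id1: "- of_real g * a + of_real l * (of_real (n*p) * a + of_real (m*q) * b)
   = of_real (l*n*p - g) * a + of_real (l*m*q) * (b::complex)"
  by (simp add: algebra_simps)

lemma ring_id2: "- of_real g * b + of_real l * (of_real (n*p) * a + of_real (m*q) * b)
   = of_real (l*n*p) * a + of_real (l*m*q - g) * (b::complex)"
  by (simp add: algebra_simps)

lemma two_ne_one: "(2::2) \<noteq> 1" by simp

lemma comm_mean:
  assumes sg: "\<forall>i. s i = 1 \<or> s i = -1"
  shows "Lk \<beta> lp lk s (Mphi s *v w) = Mphi s *v (Bk \<beta> lp lk s *v w)"
proof (subst vec_eq_iff, intro allI)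
  fix i
  have K: "(\<Sum>j\<in>UNIV. of_real (Kstar \<beta> lp s i j) * (Mphi s *v w)$j)
     = of_real (nplus s * (if s i = 1 then aplus \<beta> lp s else bminus \<beta> lp s)) * w$1
     + of_real (nminus s * (if s i = 1 then bplus \<beta> lp s else aminus \<beta> lp s)) * w$2"
    by (rule Kstar_sum[OF sg])
  show "Lk \<beta> lp lk s (Mphi s *v w) $ i = (Mphi s *v (Bk \<beta> lp lk s *v w)) $ i"
  proof (cases "s i = 1")
    case True
    have b1: "Bk \<beta> lp lk s $ 1 $ 1 = of_real (lk * nplus s * aplus \<beta> lp s - gplus \<beta> lp s)"
      and b2: "Bk \<beta> lp lk s $ 1 $ 2 = of_real (lk * nminus s * bplus \<beta> lp s)"
      by (simp_all only: Bk_def vec_lambda_beta simp_thms(6) if_True if_False two_ne_one)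
    show ?thesis unfolding Lk_comp K unfolding Mphi_comp Bk_comp b1 b2 using True
      by (simp only: True simp_thms(6) if_True gam_def ring_id1)
  next
    case False
    have b1: "Bk \<beta> lp lk s $ 2 $ 1 = of_real (lk * nplus s * bminus \<beta> lp s)"
      and b2: "Bk \<beta> lp lk s $ 2 $ 2 = of_real (lk * nminus s * aminus \<beta> lp s - gminus \<beta> lp s)"
      by (simp_all only: Bk_def vec_lambda_beta simp_thms(6) if_True if_False two_ne_one)
    show ?thesis unfolding Lk_comp K unfolding Mphi_comp Bk_comp using False
      by (simp only: False two_ne_one if_False b1 b2 gam_def ring_id2)
  qed
qed

lemma Vmean_range:
  assumes sg: "\<forall>i. s i = 1 \<or> s i = -1" and nc: "\<exists>i j. s i \<noteq> s j"
  shows "Vmean s = range ((*v) (Mphi s))"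
proof -
  obtain ip im where ip: "s ip = 1" and im: "s im = -1" using sg nc by metis
  show ?thesis
  proof (intro set_eqI iffI)
    fix z assume z: "z \<in> Vmean s"
    have zp: "\<And>i. s i = 1 \<Longrightarrow> z$i = z$ip" using z ip unfolding Vmean_def by blast
    have zm: "\<And>i. s i = -1 \<Longrightarrow> z$i = z$im" using z im unfolding Vmean_def by blast
    define w where "w = ((\<chi> r. if r = 1 then z$ip else z$im) :: complex^2)"
    have "Mphi s *v w = z"
    proof (subst vec_eq_iff, intro allI)
      fix i
      show "(Mphi s *v w) $ i = z $ i"
      proof (cases "s i = 1")
        case True thus ?thesis using zp[OF True] by (simp add: Mphi_comp w_def)
      next
        case False hence "s i = -1" using sg by blast
        thus ?thesis using zm False by (simp add: Mphi_comp w_def)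
      qed
    qed
    thus "z \<in> range ((*v) (Mphi s))" by (metis rangeI)
  next
    fix z assume "z \<in> range ((*v) (Mphi s))"
    then obtain w where w: "z = Mphi s *v w" by auto
    have "\<forall>i j. s i = 1 \<and> s j = 1 \<longrightarrow> z$i = z$j" by (simp add: w Mphi_comp)
    moreover have "\<forall>i j. s i = -1 \<and> s j = -1 \<longrightarrow> z$i = z$j" by (simp add: w Mphi_comp)
    ultimately show "z \<in> Vmean s" unfolding Vmean_def by blast
  qed
qed

lemma inj_Mphi:
  assumes sg: "\<forall>i. s i = 1 \<or> s i = -1" and nc: "\<exists>i j. s i \<noteq> s j"
  shows "inj ((*v) (Mphi s))"
proof (rule injI)
  obtain ip im where ip: "s ip = 1" and im: "s im = -1" using sg nc by metis
  fix x y assume h: "Mphi s *v x = Mphi s *v y"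
  have 1: "x$1 = y$1" using arg_cong[OF h, of "\<lambda>v. v$ip"] ip by (simp add: Mphi_comp)
  have 2: "x$2 = y$2" using arg_cong[OF h, of "\<lambda>v. v$im"] im by (simp add: Mphi_comp)
  show "x = y" using 1 2 by (simp add: vec_eq_iff forall_2)
qed



theorem propositionA3:
  fixes \<beta> lp lk :: real and s :: "'n::finite \<Rightarrow> real"
  assumes "\<beta> > 0"
    and "\<forall>i. s i = 1 \<or> s i = -1"
    and "\<exists>i j. s i \<noteq> s j"
  shows "(\<forall>\<mu>. eigenvalue_on (Lk \<beta> lp lk s) (Vplus s) \<mu> \<longrightarrow> \<mu> = - of_real (gplus \<beta> lp s))
       \<and> alg_mult_on (Lk \<beta> lp lk s) (Vplus s) (- of_real (gplus \<beta> lp s)) = card {i. s i = 1} - 1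
       \<and> (\<forall>\<mu>. eigenvalue_on (Lk \<beta> lp lk s) (Vminus s) \<mu> \<longrightarrow> \<mu> = - of_real (gminus \<beta> lp s))
       \<and> alg_mult_on (Lk \<beta> lp lk s) (Vminus s) (- of_real (gminus \<beta> lp s)) = card {i. s i = -1} - 1
       \<and> (\<forall>\<mu>. eigenvalue_on (Lk \<beta> lp lk s) (Vmean s) \<mu> \<longleftrightarrow> eigenvalue_on ((*v) (Bk \<beta> lp lk s)) UNIV \<mu>)
       \<and> (\<forall>\<mu>. alg_mult_on (Lk \<beta> lp lk s) (Vmean s) \<mu> = alg_mult_on ((*v) (Bk \<beta> lp lk s)) UNIV \<mu>)"
proof -
  note sg = assms(2) and nc = assms(3)
  obtain ip im where ip: "s ip = 1" and im: "s im = -1" using sg nc by metis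
  have Pne: "{i. s i = 1} \<noteq> {}" using ip by blast
  have Qne: "{i. s i = -1} \<noteq> {}" using im by blast
  have Lp: "\<forall>z\<in>Vplus s. Lk \<beta> lp lk s z = (- of_real (gplus \<beta> lp s)) *s z"
    using Lplus[OF sg] by blast
  have Lm: "\<forall>z\<in>Vminus s. Lk \<beta> lp lk s z = (- of_real (gminus \<beta> lp s)) *s z"
    using Lminus[OF sg] by blast
  have r1: "\<forall>\<mu>. eigenvalue_on (Lk \<beta> lp lk s) (Vplus s) \<mu> \<longrightarrow> \<mu> = - of_real (gplus \<beta> lp s)"
    using eig_only[OF Lp] by blast
  have r3: "\<forall>\<mu>. eigenvalue_on (Lk \<beta> lp lk s) (Vminus s) \<mu> \<longrightarrow> \<mu> = - of_real (gminus \<beta> lp s)"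
    using eig_only[OF Lm] by blast
  have r2: "alg_mult_on (Lk \<beta> lp lk s) (Vplus s) (- of_real (gplus \<beta> lp s)) = card {i. s i = 1} - 1"
    unfolding alg_mult_on_def gen_all[OF Lp] unfolding Vplus_eq[OF sg] by (rule dim_Vset[OF Pne])
  have r4: "alg_mult_on (Lk \<beta> lp lk s) (Vminus s) (- of_real (gminus \<beta> lp s)) = card {i. s i = -1} - 1"
    unfolding alg_mult_on_def gen_all[OF Lm] unfolding Vminus_eq[OF sg] by (rule dim_Vset[OF Qne])
  have lin: "Vector_Spaces.linear (*s) (*s) ((*v) (Mphi s))" by (rule matrix_vector_mul_linear_gen)
  have cm: "\<And>x. Lk \<beta> lp lk s (Mphi s *v x) = Mphi s *v (Bk \<beta> lp lk s *v x)"
    by (rule comm_mean[OF sg])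
  note C = conj_thm[of "(*v) (Mphi s)" "Lk \<beta> lp lk s" "(*v) (Bk \<beta> lp lk s)", OF lin inj_Mphi[OF sg nc] cm]
  have r5: "\<forall>\<mu>. eigenvalue_on (Lk \<beta> lp lk s) (Vmean s) \<mu> \<longleftrightarrow> eigenvalue_on ((*v) (Bk \<beta> lp lk s)) UNIV \<mu>"
    unfolding Vmean_range[OF sg nc] using C(1) by blast
  have r6: "\<forall>\<mu>. alg_mult_on (Lk \<beta> lp lk s) (Vmean s) \<mu> = alg_mult_on ((*v) (Bk \<beta> lp lk s)) UNIV \<mu>"
    unfolding Vmean_range[OF sg nc] using C(2) by blast
  show ?thesis using r1 r2 r3 r4 r5 r6 by blast
qed


end
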